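(* Let $\kappa$ be a regular infinite cardinal, let $\mathscr{F},\mathscr{G}\subseteq[\kappa]^\kappa$, and let $\Pi=\{I_\alpha:\alpha<\kappa\}$ be an interval partition of $\kappa$. Then at least one of the following holds: (a) $\mathscr{F}$ is $\Pi$-scattered; (b) $\Pi$ is $\mathscr{G}$-scattered; (c) there exist $y\in\mathscr{F}$ and a non-decreasing function $h:\kappa\to\kappa$ such that $|h^{-1}(\{\alpha\})|<\kappa$ for every $\alpha<\kappa$, and the family $\{h[y\cap z]:z\in\mathscr{G}\}$ is unreaped.
   Context: For a regular cardinal $\kappa$, an interval partition of $\kappa$ is a family $\Pi=\{I_\alpha:\alpha<\kappa\}$ of pairwise disjoint non-empty intervals $I_\alpha=[\gamma_\alpha,\gamma_{\alpha+1})$ whose union is $\kappa$. A pair $(D,E)$ is a nice $\Pi$-orbit if each of $D$ and $E$ is a union of $\kappa$-many intervals of $\Pi$, no interval of $\Pi$ is contained in both, and no interval of $\Pi$ contained in $D$ is adjacent (i.e. of the form $I_\alpha,I_{\alpha+1}$ in either order) to an interval of $\Pi$ contained in $E$. A family $\mathscr{F}\subseteq[\kappa]^\kappa$ is $\Pi$-scattered if for every nice $\Pi$-orbit $(D,E)$ and every $y\in\mathscr{F}$, $|y\cap D|=|y\cap E|=\kappa$. $\Pi$ is $\mathscr{G}$-scattered if there exists a nice $\Pi$-orbit $(D,E)$ such that $|z\cap D|=|z\cap E|=\kappa$ for every $z\in\mathscr{G}$. A set $S\subseteq\kappa$ splits $B\subseteq\kappa$ if $|S\cap B|=|B\setminus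 S|=\kappa$. A family $\mathcal{A}$ of subsets of $\kappa$ is unreaped (an $\mathfrak{r}_\kappa$-family) if there is no $S\in[\kappa]^\kappa$ which splits every member of $\mathcal{A}$. $h[X]$ denotes the pointwise image $\{h(x):x\in X\}$. *)

theory Defs
  imports Main
begin

unbundle cardinal_syntax

text \<open>A regular infinite cardinal kappa is represented by a cardinal order r on the
  whole type 'k: the elements of 'k are the ordinals below kappa, ordered by r.
  For X a subset of kappa, "|X| = kappa" is  |X| =o r  and "|X| < kappa" is  |X| <o r.\<close>

definition leq_k :: "'k rel \<Rightarrow> 'k \<Rightarrow> 'k \<Rightarrow> bool" where
  "leq_k r a b \<longleftrightarrow> (a, b) \<in> r"

definition less_k :: "'k rel \<Rightarrow> 'k \<Rightarrow> 'k \<Rightarrow> bool" where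
  "less_k r a b \<longleftrightarrow> (a, b) \<in> r \<and> a \<noteq> b"

definition succ_k :: "'k rel \<Rightarrow> 'k \<Rightarrow> 'k" where
  "succ_k r a = wo_rel.suc r {a}"

definition full_size :: "'k rel \<Rightarrow> 'k set \<Rightarrow> bool" where
  "full_size r X \<longleftrightarrow> |X| =o r"

definition interval_k :: "'k rel \<Rightarrow> 'k \<Rightarrow> 'k \<Rightarrow> 'k set" where
  "interval_k r a b = {x. leq_k r a x \<and> less_k r x b}"

definition interval_partition :: "'k rel \<Rightarrow> ('k \<Rightarrow> 'k set) \<Rightarrow> bool" where
  "interval_partition r I \<longleftrightarrow>
     (\<exists>\<gamma>. \<forall>\<alpha>. I \<alpha> = interval_k r (\<gamma> \<alpha>) (\<gamma> (succ_k r \<alpha>))) \<and>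
     (\<forall>\<alpha>. I \<alpha> \<noteq> {}) \<and>
     (\<forall>\<alpha> \<beta>. \<alpha> \<noteq> \<beta> \<longrightarrow> I \<alpha> \<inter> I \<beta> = {}) \<and>
     (\<Union>\<alpha>. I \<alpha>) = UNIV"

definition union_of_kappa_intervals :: "'k rel \<Rightarrow> ('k \<Rightarrow> 'k set) \<Rightarrow> 'k set \<Rightarrow> bool" where
  "union_of_kappa_intervals r I D \<longleftrightarrow> (\<exists>A. |A| =o r \<and> D = (\<Union>\<alpha>\<in>A. I \<alpha>))"

definition nice_orbit :: "'k rel \<Rightarrow> ('k \<Rightarrow> 'k set) \<Rightarrow> 'k set \<Rightarrow> 'k set \<Rightarrow> bool" where
  "nice_orbit r I D E \<longleftrightarrow>
     union_of_kappa_intervals r I D \<and> union_of_kappa_intervals r I E \<and>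
     (\<forall>\<alpha>. \<not> (I \<alpha> \<subseteq> D \<and> I \<alpha> \<subseteq> E)) \<and>
     (\<forall>\<alpha> \<beta>. I \<alpha> \<subseteq> D \<and> I \<beta> \<subseteq> E \<longrightarrow> \<beta> \<noteq> succ_k r \<alpha> \<and> \<alpha> \<noteq> succ_k r \<beta>)"

definition family_scattered :: "'k rel \<Rightarrow> ('k \<Rightarrow> 'k set) \<Rightarrow> 'k set set \<Rightarrow> bool" where
  "family_scattered r I F \<longleftrightarrow>
     (\<forall>D E. nice_orbit r I D E \<longrightarrow> (\<forall>y\<in>F. |y \<inter> D| =o r \<and> |y \<inter> E| =o r))"

definition partition_scattered :: "'k rel \<Rightarrow> ('k \<Rightarrow> 'k set) \<Rightarrow> 'k set set \<Rightarrow> bool" where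
  "partition_scattered r I G \<longleftrightarrow>
     (\<exists>D E. nice_orbit r I D E \<and> (\<forall>z\<in>G. |z \<inter> D| =o r \<and> |z \<inter> E| =o r))"

definition splits :: "'k rel \<Rightarrow> 'k set \<Rightarrow> 'k set \<Rightarrow> bool" where
  "splits r S B \<longleftrightarrow> |S \<inter> B| =o r \<and> |B - S| =o r"

definition unreaped :: "'k rel \<Rightarrow> 'k set set \<Rightarrow> bool" where
  "unreaped r \<A> \<longleftrightarrow> \<not> (\<exists>S. |S| =o r \<and> (\<forall>B\<in>\<A>. splits r S B))"

end

theory Submission
  imports Defs
begin

unbundle cardinal_syntax

lemma co_field: "card_order r \<Longrightarrow> Field r = UNIV"
  using card_order_on_Card_order by blast

lemma co_Card: "card_order r \<Longrightarrow> Card_order r"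
  using card_order_on_Card_order by blast

lemma co_wo: "card_order r \<Longrightarrow> wo_rel r"
  unfolding wo_rel_def using card_order_on_well_order_on well_order_on_Well_order by blast

lemma co_refl: "card_order r \<Longrightarrow> (a,a) \<in> r"
  using co_wo[of r] co_field[of r] wo_rel.REFL[of r] unfolding refl_on_def by blast

lemma co_trans: "card_order r \<Longrightarrow> (a,b) \<in> r \<Longrightarrow> (b,c) \<in> r \<Longrightarrow> (a,c) \<in> r"
  using co_wo[of r] wo_rel.TRANS[of r] unfolding trans_def by blast

lemma co_antisym: "card_order r \<Longrightarrow> (a,b) \<in> r \<Longrightarrow> (b,a) \<in> r \<Longrightarrow> a = b"
  using co_wo[of r] wo_rel.ANTISYM[of r] unfolding antisym_def by blast

lemma co_total: "card_order r \<Longrightarrow> (a,b) \<in> r \<or> (b,a) \<in> r"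
  using co_wo[of r] wo_rel.TOTALS[of r] co_field[of r] by blast

lemma c_le: "card_order (r::'a rel) \<Longrightarrow> |X::'a set| \<le>o r"
proof -
  assume c: "card_order r"
  have "|X| \<le>o |Field r|" using card_of_mono1[of X "Field r"] co_field[OF c] by simp
  moreover have "|Field r| =o r" using co_Card[OF c] by (rule card_of_Field_ordIso)
  ultimately show ?thesis by (rule ordLeq_ordIso_trans)
qed

lemma c_niso: "card_order (r::'a rel) \<Longrightarrow> \<not> |X::'a set| =o r \<Longrightarrow> |X| <o r"
  using c_le[of r X] ordLeq_iff_ordLess_or_ordIso[of "|X|" r] by blast

lemma c_sub: "X \<subseteq> Y \<Longrightarrow> |Y| <o r \<Longrightarrow> |X| <o r"
  by (rule ordLeq_ordLess_trans[OF card_of_mono1])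

lemma c_img: "|X| <o r \<Longrightarrow> |f ` X| <o r"
  by (rule ordLeq_ordLess_trans[OF card_of_image])

lemma c_un: "card_order r \<Longrightarrow> cinfinite r \<Longrightarrow> |A| <o r \<Longrightarrow> |B| <o r \<Longrightarrow> |A \<union> B| <o r"
  unfolding cinfinite_def by (rule card_of_Un_ordLess_infinite_Field[OF _ co_Card])

lemma c_under: "card_order r \<Longrightarrow> cinfinite r \<Longrightarrow> |{x. (x,p) \<in> r}| <o r"
proof -
  assume c: "card_order r" and i: "cinfinite r"
  have 1: "|underS r p| <o r" by (rule card_of_underS[OF co_Card[OF c]]) (simp add: co_field[OF c])
  have W: "Well_order r" using co_wo[OF c] unfolding wo_rel_def .
  have 2: "|{p}| <o r"
  proof (rule finite_ordLess_infinite[OF card_of_Well_order W])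
    show "finite (Field |{p}| )" by (simp add: Field_card_of)
    show "\<not> finite (Field r)" using i unfolding cinfinite_def .
  qed
  have "{x. (x,p) \<in> r} \<subseteq> underS r p \<union> {p}" unfolding underS_def by auto
  thus ?thesis using c_un[OF c i 1 2] by (rule c_sub)
qed

lemma core:
  fixes r :: "'k rel" and I :: "'k \<Rightarrow> 'k set" and D y :: "'k set" and G :: "'k set set"
  assumes c: "card_order r" and i: "cinfinite r"
    and Pi: "interval_partition r I"
    and UD: "union_of_kappa_intervals r I D"
    and yD: "|y \<inter> D| <o r"
    and Gne: "G \<noteq> {}"
    and nb: "\<not> partition_scattered r I G"
  shows "\<exists>h :: 'k \<Rightarrow> 'k. (\<forall>\<alpha> \<beta>. leq_k r \<alpha> \<beta> \<longrightarrow> leq_k r (h \<alpha>) (h \<beta>)) \<and>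
            (\<forall>\<alpha>. |h -` {\<alpha>}| <o r) \<and> unreaped r ((\<lambda>z. h ` (y \<inter> z)) ` G)"
proof -
  obtain \<gamma> where I\<gamma>: "\<And>\<alpha>. I \<alpha> = interval_k r (\<gamma> \<alpha>) (\<gamma> (succ_k r \<alpha>))"
    using Pi unfolding interval_partition_def by blast
  have ne: "\<And>\<alpha>. I \<alpha> \<noteq> {}" and dis: "\<And>\<alpha> \<beta>. \<alpha> \<noteq> \<beta> \<Longrightarrow> I \<alpha> \<inter> I \<beta> = {}"
    using Pi unfolding interval_partition_def by blast+
  have cov: "\<And>x. \<exists>\<alpha>. x \<in> I \<alpha>"
  proof -
    fix x
    have "x \<in> (\<Union>\<alpha>. I \<alpha>)" using Pi unfolding interval_partition_def by blast
    then show "\<exists>\<alpha>. x \<in> I \<alpha>" by blast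
  qed
  have memI: "\<And>x \<alpha>. x \<in> I \<alpha> \<longleftrightarrow> (\<gamma> \<alpha>, x) \<in> r \<and> (x, \<gamma> (succ_k r \<alpha>)) \<in> r \<and> x \<noteq> \<gamma> (succ_k r \<alpha>)"
    using I\<gamma> unfolding interval_k_def leq_k_def less_k_def by auto
  note tr = co_trans[OF c] and as = co_antisym[OF c] and tot = co_total[OF c] and rf = co_refl[OF c]
  have gI: "\<And>\<alpha>. \<gamma> \<alpha> \<in> I \<alpha>"
  proof -
    fix \<alpha>
    obtain w where "w \<in> I \<alpha>" using ne by blast
    then have w: "(\<gamma> \<alpha>, w) \<in> r" "(w, \<gamma> (succ_k r \<alpha>)) \<in> r" "w \<noteq> \<gamma> (succ_k r \<alpha>)" using memI by auto
    have "(\<gamma> \<alpha>, \<gamma> (succ_k r \<alpha>)) \<in> r" using tr w by blast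
    moreover have "\<gamma> \<alpha> \<noteq> \<gamma> (succ_k r \<alpha>)"
    proof
      assume e: "\<gamma> \<alpha> = \<gamma> (succ_k r \<alpha>)"
      then have "w = \<gamma> \<alpha>" using as w by simp
      then show False using e w by simp
    qed
    ultimately show "\<gamma> \<alpha> \<in> I \<alpha>" using memI rf by blast
  qed
  have ginj: "inj \<gamma>"
  proof (rule injI)
    fix a b assume e: "\<gamma> a = \<gamma> b"
    have "\<gamma> a \<in> I a \<inter> I b" using gI[of a] gI[of b] e by simp
    then show "a = b" using dis[of a b] by auto
  qed
  obtain A0 where A0: "|A0| =o r" "D = (\<Union>\<alpha>\<in>A0. I \<alpha>)"
    using UD unfolding union_of_kappa_intervals_def by blast
  have Dout: "\<And>x \<alpha>. x \<in> I \<alpha> \<Longrightarrow> x \<notin> D \<Longrightarrow> I \<alpha> \<inter> D = {}"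
  proof -
    fix x \<alpha> assume x: "x \<in> I \<alpha>" "x \<notin> D"
    then have "\<alpha> \<notin> A0" using A0(2) by blast
    show "I \<alpha> \<inter> D = {}"
    proof (rule ccontr)
      assume "I \<alpha> \<inter> D \<noteq> {}"
      then obtain w \<beta> where w: "w \<in> I \<alpha>" "\<beta> \<in> A0" "w \<in> I \<beta>" using A0(2) by blast
      then have "\<alpha> \<noteq> \<beta>" using \<open>\<alpha> \<notin> A0\<close> by blast
      then have "I \<alpha> \<inter> I \<beta> = {}" by (rule dis)
      then show False using w by blast
    qed
  qed
  have unb: "\<exists>p\<in>D. (b,p) \<in> r" for b
  proof (rule ccontr)
    assume "\<not> (\<exists>p\<in>D. (b,p) \<in> r)"
    then have "D \<subseteq> {x. (x,b) \<in> r}" using tot by blast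
    then have s: "|D| <o r" using c_sub c_under[OF c i] by blast
    have "\<gamma> ` A0 \<subseteq> D" using A0(2) gI by blast
    moreover have "inj_on \<gamma> A0" using ginj inj_on_subset by blast
    ultimately have "|A0| \<le>o |D|" using card_of_ordLeq by blast
    then have "|A0| <o r" using s ordLeq_ordLess_trans by blast
    then show False using A0(1) not_ordLess_ordIso by blast
  qed
  define h where "h x = wo_rel.minim r {p\<in>D. (x,p) \<in> r}" for x
  have wo: "wo_rel r" using co_wo[OF c] .
  have hprops: "\<And>x. h x \<in> D \<and> (x, h x) \<in> r \<and> (\<forall>p. p \<in> D \<and> (x,p) \<in> r \<longrightarrow> (h x, p) \<in> r)"
  proof -
    fix x
    have ne': "{p\<in>D. (x,p) \<in> r} \<noteq> {}" using unb by blast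
    have sub: "{p\<in>D. (x,p) \<in> r} \<subseteq> Field r" using co_field[OF c] by simp
    show "h x \<in> D \<and> (x, h x) \<in> r \<and> (\<forall>p. p \<in> D \<and> (x,p) \<in> r \<longrightarrow> (h x, p) \<in> r)"
      using wo_rel.minim_in[OF wo sub ne'] wo_rel.minim_least[OF wo sub] unfolding h_def by auto
  qed
  have hfix: "\<And>x. x \<in> D \<Longrightarrow> h x = x" using hprops rf as by blast
  have hmono: "\<And>a b. (a,b) \<in> r \<Longrightarrow> (h a, h b) \<in> r"
  proof -
    fix a b assume "(a,b) \<in> r"
    then have "(a, h b) \<in> r" using hprops tr by blast
    then show "(h a, h b) \<in> r" using hprops by blast
  qed
  have hfib: "\<And>p. |h -` {p}| <o r"
  proof -
    fix p
    have "h -` {p} \<subseteq> {x. (x,p) \<in> r}" using hprops by auto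
    then show "|h -` {p}| <o r" using c_sub c_under[OF c i] by blast
  qed
  have hconst: "\<And>x x'. (x,x') \<in> r \<Longrightarrow> (\<forall>w. (x,w) \<in> r \<and> (w,x') \<in> r \<and> w \<noteq> x' \<longrightarrow> w \<notin> D) \<Longrightarrow> h x = h x'"
  proof -
    fix x x' assume xx: "(x,x') \<in> r" and gap: "\<forall>w. (x,w) \<in> r \<and> (w,x') \<in> r \<and> w \<noteq> x' \<longrightarrow> w \<notin> D"
    have "(x', h x) \<in> r"
    proof (rule ccontr)
      assume n: "(x', h x) \<notin> r"
      then have "(h x, x') \<in> r" "h x \<noteq> x'" using tot rf by blast+
      then show False using gap hprops by blast
    qed
    then have "(h x', h x) \<in> r" using hprops by blast
    moreover have "(h x, h x') \<in> r" using hmono xx by blast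
    ultimately show "h x = h x'" using as by blast
  qed
  have hI: "\<And>\<alpha> x x'. I \<alpha> \<inter> D = {} \<Longrightarrow> x \<in> I \<alpha> \<Longrightarrow> x' \<in> I \<alpha> \<Longrightarrow> h x = h x'"
  proof -
    have one: "\<And>\<alpha> x x'. I \<alpha> \<inter> D = {} \<Longrightarrow> x \<in> I \<alpha> \<Longrightarrow> x' \<in> I \<alpha> \<Longrightarrow> (x,x') \<in> r \<Longrightarrow> h x = h x'"
    proof -
      fix \<alpha> x x' assume a: "I \<alpha> \<inter> D = {}" "x \<in> I \<alpha>" "x' \<in> I \<alpha>" "(x,x') \<in> r"
      show "h x = h x'"
      proof (rule hconst[OF a(4)], intro allI impI)
        fix w assume w: "(x,w) \<in> r \<and> (w,x') \<in> r \<and> w \<noteq> x'"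
        have m1: "(\<gamma> \<alpha>, x) \<in> r" "(x', \<gamma> (succ_k r \<alpha>)) \<in> r" "x' \<noteq> \<gamma> (succ_k r \<alpha>)" using memI a by auto
        have "(\<gamma> \<alpha>, w) \<in> r" using tr m1 w by blast
        moreover have "(w, \<gamma> (succ_k r \<alpha>)) \<in> r" using tr m1 w by blast
        moreover have "w \<noteq> \<gamma> (succ_k r \<alpha>)" using as m1 w by blast
        ultimately have "w \<in> I \<alpha>" using memI by blast
        then show "w \<notin> D" using a by blast
      qed
    qed
    fix \<alpha> x x' assume "I \<alpha> \<inter> D = {}" "x \<in> I \<alpha>" "x' \<in> I \<alpha>"
    then show "h x = h x'" using one tot by metis
  qed
  have hadj: "\<And>\<alpha> x x'. I \<alpha> \<inter> D = {} \<Longrightarrow> I (succ_k r \<alpha>) \<inter> D = {} \<Longrightarrow> x \<in> I \<alpha> \<Longrightarrow> x' \<in> I (succ_k r \<alpha>) \<Longrightarrow> h x = h x'"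
  proof -
    fix \<alpha> x x' assume a: "I \<alpha> \<inter> D = {}" "I (succ_k r \<alpha>) \<inter> D = {}" "x \<in> I \<alpha>" "x' \<in> I (succ_k r \<alpha>)"
    define s where "s = \<gamma> (succ_k r \<alpha>)"
    define t where "t = \<gamma> (succ_k r (succ_k r \<alpha>))"
    have m1: "(\<gamma> \<alpha>, x) \<in> r" "(x, s) \<in> r" "x \<noteq> s" "(s, x') \<in> r" "(x', t) \<in> r" "x' \<noteq> t"
      using memI a unfolding s_def t_def by auto
    have xx: "(x,x') \<in> r" using tr m1 by blast
    show "h x = h x'"
    proof (rule hconst[OF xx], intro allI impI)
      fix w assume w: "(x,w) \<in> r \<and> (w,x') \<in> r \<and> w \<noteq> x'"
      show "w \<notin> D"
      proof (cases "(w, s) \<in> r \<and> w \<noteq> s")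
        case True
        then have "w \<in> I \<alpha>" using memI m1 w tr unfolding s_def by blast
        then show ?thesis using a by blast
      next
        case False
        then have sw: "(s, w) \<in> r" using tot rf by blast
        have "(w, t) \<in> r" using tr w m1 by blast
        moreover have "w \<noteq> t" using as w m1 by blast
        ultimately have "w \<in> I (succ_k r \<alpha>)" using memI sw unfolding s_def t_def by blast
        then show ?thesis using a by blast
      qed
    qed
  qed
  define cc where "cc \<alpha> = h (\<gamma> \<alpha>)" for \<alpha>
  have hc: "\<And>\<alpha> x. I \<alpha> \<inter> D = {} \<Longrightarrow> x \<in> I \<alpha> \<Longrightarrow> h x = cc \<alpha>" using hI gI unfolding cc_def by metis
  have sub_idx: "\<And>\<alpha> A. I \<alpha> \<subseteq> (\<Union>\<beta>\<in>A. I \<beta>) \<Longrightarrow> \<alpha> \<in> A"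
  proof -
    fix \<alpha> A assume a: "I \<alpha> \<subseteq> (\<Union>\<beta>\<in>A. I \<beta>)"
    then obtain \<beta> where b: "\<beta> \<in> A" "\<gamma> \<alpha> \<in> I \<beta>" using gI by blast
    show "\<alpha> \<in> A"
    proof (rule ccontr)
      assume "\<alpha> \<notin> A"
      then have "\<alpha> \<noteq> \<beta>" using b by blast
      then have "I \<alpha> \<inter> I \<beta> = {}" by (rule dis)
      then show False using gI[of \<alpha>] b by blast
    qed
  qed
  have locate: "\<And>x. x \<notin> D \<Longrightarrow> \<exists>\<alpha>. x \<in> I \<alpha> \<and> I \<alpha> \<inter> D = {} \<and> h x = cc \<alpha>"
    using cov Dout hc by blast
  have unr: "unreaped r ((\<lambda>z. h ` (y \<inter> z)) ` G)"
    unfolding unreaped_def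
  proof
    assume "\<exists>S. |S| =o r \<and> (\<forall>B\<in>(\<lambda>z. h ` (y \<inter> z)) ` G. splits r S B)"
    then obtain S where spl: "\<And>z. z \<in> G \<Longrightarrow> splits r S (h ` (y \<inter> z))" by blast
    define AS where "AS = {\<alpha>. I \<alpha> \<inter> D = {} \<and> cc \<alpha> \<in> S}"
    define AN where "AN = {\<alpha>. I \<alpha> \<inter> D = {} \<and> cc \<alpha> \<notin> S}"
    define D' where "D' = (\<Union>\<alpha>\<in>AS. I \<alpha>)"
    define E' where "E' = (\<Union>\<alpha>\<in>AN. I \<alpha>)"
    have c1: "\<And>z. S \<inter> h ` (y \<inter> z) \<subseteq> (y \<inter> D) \<union> cc ` AS \<and> S \<inter> h ` (y \<inter> z) \<subseteq> (y \<inter> D) \<union> h ` (z \<inter> D')"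
    proof -
      fix z
      have "w \<in> (y \<inter> D) \<union> cc ` AS \<and> w \<in> (y \<inter> D) \<union> h ` (z \<inter> D')" if "w \<in> S \<inter> h ` (y \<inter> z)" for w
      proof -
        obtain x where x: "x \<in> y" "x \<in> z" "w = h x" "w \<in> S" using \<open>w \<in> S \<inter> h ` (y \<inter> z)\<close> by blast
        show ?thesis
        proof (cases "x \<in> D")
          case True then show ?thesis using x hfix by auto
        next
          case False
          then obtain \<alpha> where a: "x \<in> I \<alpha>" "I \<alpha> \<inter> D = {}" "h x = cc \<alpha>" using locate by blast
          then have a2: "\<alpha> \<in> AS" using x unfolding AS_def by auto
          have xD: "x \<in> D'" unfolding D'_def using a(1) a2 by (rule UN_I[rotated])
          have xz: "x \<in> z \<inter> D'" using x(2) xD by (rule IntI)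
          have w1: "w \<in> h ` (z \<inter> D')" using x(3) xz by (rule image_eqI)
          have wc: "w = cc \<alpha>" using x(3) a(3) by simp
          have w2: "w \<in> cc ` AS" using wc a2 by (rule image_eqI)
          show ?thesis using w2 w1 by (rule conjI[OF UnI2 UnI2])
        qed
      qed
      then show "S \<inter> h ` (y \<inter> z) \<subseteq> (y \<inter> D) \<union> cc ` AS \<and> S \<inter> h ` (y \<inter> z) \<subseteq> (y \<inter> D) \<union> h ` (z \<inter> D')"
        by blast
    qed
    have c2: "\<And>z. h ` (y \<inter> z) - S \<subseteq> (y \<inter> D) \<union> cc ` AN \<and> h ` (y \<inter> z) - S \<subseteq> (y \<inter> D) \<union> h ` (z \<inter> E')"
    proof -
      fix z
      have "w \<in> (y \<inter> D) \<union> cc ` AN \<and> w \<in> (y \<inter> D) \<union> h ` (z \<inter> E')" if "w \<in> h ` (y \<inter> z) - S" for w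
      proof -
        obtain x where x: "x \<in> y" "x \<in> z" "w = h x" "w \<notin> S" using \<open>w \<in> h ` (y \<inter> z) - S\<close> by blast
        show ?thesis
        proof (cases "x \<in> D")
          case True then show ?thesis using x hfix by auto
        next
          case False
          then obtain \<alpha> where a: "x \<in> I \<alpha>" "I \<alpha> \<inter> D = {}" "h x = cc \<alpha>" using locate by blast
          then have a2: "\<alpha> \<in> AN" using x unfolding AN_def by auto
          have xD: "x \<in> E'" unfolding E'_def using a(1) a2 by (rule UN_I[rotated])
          have xz: "x \<in> z \<inter> E'" using x(2) xD by (rule IntI)
          have w1: "w \<in> h ` (z \<inter> E')" using x(3) xz by (rule image_eqI)
          have wc: "w = cc \<alpha>" using x(3) a(3) by simp
          have w2: "w \<in> cc ` AN" using wc a2 by (rule image_eqI)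
          show ?thesis using w2 w1 by (rule conjI[OF UnI2 UnI2])
        qed
      qed
      then show "h ` (y \<inter> z) - S \<subseteq> (y \<inter> D) \<union> cc ` AN \<and> h ` (y \<inter> z) - S \<subseteq> (y \<inter> D) \<union> h ` (z \<inter> E')"
        by blast
    qed
    obtain z0 where z0: "z0 \<in> G" using Gne by blast
    have AS_big: "|AS| =o r"
    proof (rule ccontr)
      assume "\<not> |AS| =o r" then have "|AS| <o r" using c_niso[OF c] by blast
      then have "|cc ` AS| <o r" by (rule c_img)
      then have "|(y \<inter> D) \<union> cc ` AS| <o r" using c_un[OF c i yD] by blast
      then have "|S \<inter> h ` (y \<inter> z0)| <o r" using c_sub c1 by blast
      then show False using spl[OF z0] not_ordLess_ordIso unfolding splits_def by blast
    qed
    have AN_big: "|AN| =o r"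
    proof (rule ccontr)
      assume "\<not> |AN| =o r" then have "|AN| <o r" using c_niso[OF c] by blast
      then have "|cc ` AN| <o r" by (rule c_img)
      then have "|(y \<inter> D) \<union> cc ` AN| <o r" using c_un[OF c i yD] by blast
      then have "|h ` (y \<inter> z0) - S| <o r" using c_sub c2 by blast
      then show False using spl[OF z0] not_ordLess_ordIso unfolding splits_def by blast
    qed
    have n1: "union_of_kappa_intervals r I D'" unfolding union_of_kappa_intervals_def D'_def using AS_big by blast
    have n2: "union_of_kappa_intervals r I E'" unfolding union_of_kappa_intervals_def E'_def using AN_big by blast
    have n3: "\<forall>\<alpha>. \<not> (I \<alpha> \<subseteq> D' \<and> I \<alpha> \<subseteq> E')"
    proof (intro allI notI)
      fix \<alpha> assume "I \<alpha> \<subseteq> D' \<and> I \<alpha> \<subseteq> E'"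
      then have "\<alpha> \<in> AS" "\<alpha> \<in> AN" using sub_idx unfolding D'_def E'_def by blast+
      then show False unfolding AS_def AN_def by blast
    qed
    have n4: "\<forall>\<alpha> \<beta>. I \<alpha> \<subseteq> D' \<and> I \<beta> \<subseteq> E' \<longrightarrow> \<beta> \<noteq> succ_k r \<alpha> \<and> \<alpha> \<noteq> succ_k r \<beta>"
    proof (intro allI impI)
      fix \<alpha> \<beta> assume "I \<alpha> \<subseteq> D' \<and> I \<beta> \<subseteq> E'"
      then have a: "\<alpha> \<in> AS" "\<beta> \<in> AN" using sub_idx unfolding D'_def E'_def by blast+
      have b: "I \<alpha> \<inter> D = {}" "cc \<alpha> \<in> S" "I \<beta> \<inter> D = {}" "cc \<beta> \<notin> S" using a unfolding AS_def AN_def by auto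
      show "\<beta> \<noteq> succ_k r \<alpha> \<and> \<alpha> \<noteq> succ_k r \<beta>"
      proof
        show "\<beta> \<noteq> succ_k r \<alpha>"
        proof
          assume e: "\<beta> = succ_k r \<alpha>"
          have "cc \<alpha> = cc \<beta>" unfolding cc_def using hadj[of \<alpha> "\<gamma> \<alpha>" "\<gamma> \<beta>"] b gI e by blast
          then show False using b by simp
        qed
        show "\<alpha> \<noteq> succ_k r \<beta>"
        proof
          assume e: "\<alpha> = succ_k r \<beta>"
          have "cc \<beta> = cc \<alpha>" unfolding cc_def using hadj[of \<beta> "\<gamma> \<beta>" "\<gamma> \<alpha>"] b gI e by blast
          then show False using b by simp
        qed
      qed
    qed
    have "nice_orbit r I D' E'" unfolding nice_orbit_def using n1 n2 n3 n4 by blast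
    then obtain z where z: "z \<in> G" "\<not> ( |z \<inter> D'| =o r \<and> |z \<inter> E'| =o r)"
      using nb unfolding partition_scattered_def by blast
    show False
    proof (cases "|z \<inter> D'| =o r")
      case False
      then have "|z \<inter> D'| <o r" using c_niso[OF c] by blast
      then have "|h ` (z \<inter> D')| <o r" by (rule c_img)
      then have "|(y \<inter> D) \<union> h ` (z \<inter> D')| <o r" using c_un[OF c i yD] by blast
      then have "|S \<inter> h ` (y \<inter> z)| <o r" using c_sub c1 by blast
      then show False using spl[OF z(1)] not_ordLess_ordIso unfolding splits_def by blast
    next
      case True
      then have "|z \<inter> E'| <o r" using z(2) c_niso[OF c] by blast
      then have "|h ` (z \<inter> E')| <o r" by (rule c_img)
      then have "|(y \<inter> D) \<union> h ` (z \<inter> E')| <o r" using c_un[OF c i yD] by blast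
      then have "|h ` (y \<inter> z) - S| <o r" using c_sub c2 by blast
      then show False using spl[OF z(1)] not_ordLess_ordIso unfolding splits_def by blast
    qed
  qed
  have m: "\<forall>\<alpha> \<beta>. leq_k r \<alpha> \<beta> \<longrightarrow> leq_k r (h \<alpha>) (h \<beta>)" using hmono unfolding leq_k_def by blast
  have f: "\<forall>\<alpha>. |h -` {\<alpha>}| <o r" using hfib by blast
  show ?thesis by (rule exI[of _ h], intro conjI m f unr)
qed

theorem theorem2p6:
  fixes r :: "'k rel" and F G :: "'k set set" and I :: "'k \<Rightarrow> 'k set"
  assumes kappa: "card_order r" "cinfinite r" "regularCard r"
    and F: "\<forall>y\<in>F. full_size r y"
    and G: "\<forall>z\<in>G. full_size r z"
    and Pi: "interval_partition r I"
  shows "family_scattered r I F \<or> partition_scattered r I G \<or>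
         (\<exists>y\<in>F. \<exists>h :: 'k \<Rightarrow> 'k.
            (\<forall>\<alpha> \<beta>. leq_k r \<alpha> \<beta> \<longrightarrow> leq_k r (h \<alpha>) (h \<beta>)) \<and>
            (\<forall>\<alpha>. |h -` {\<alpha>}| <o r) \<and>
            unreaped r ((\<lambda>z. h ` (y \<inter> z)) ` G))"
proof (rule disjCI)
  assume n: "\<not> (partition_scattered r I G \<or>
         (\<exists>y\<in>F. \<exists>h :: 'k \<Rightarrow> 'k.
            (\<forall>\<alpha> \<beta>. leq_k r \<alpha> \<beta> \<longrightarrow> leq_k r (h \<alpha>) (h \<beta>)) \<and>
            (\<forall>\<alpha>. |h -` {\<alpha>}| <o r) \<and>
            unreaped r ((\<lambda>z. h ` (y \<inter> z)) ` G)))"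
  show "family_scattered r I F"
    unfolding family_scattered_def
  proof (intro allI impI ballI)
    fix D E y assume nice: "nice_orbit r I D E" and y: "y \<in> F"
    have nb: "\<not> partition_scattered r I G" using n by blast
    have Gne: "G \<noteq> {}"
    proof
      assume "G = {}"
      then have "partition_scattered r I G" using nice unfolding partition_scattered_def by blast
      then show False using nb by blast
    qed
    show "|y \<inter> D| =o r \<and> |y \<inter> E| =o r"
    proof (rule ccontr)
      assume "\<not> ( |y \<inter> D| =o r \<and> |y \<inter> E| =o r)"
      then obtain X where X: "union_of_kappa_intervals r I X" "|y \<inter> X| <o r"
        using nice c_niso[OF kappa(1)] unfolding nice_orbit_def by blast
      from core[OF kappa(1,2) Pi X Gne nb] y n show False by blast
    qed
  qed
qed

end
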